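(* $P_h(\mathbb{S}^1)=\{0,1,2,3,\ldots\}\cup\{+\infty\}$, where $\mathbb{S}^1=\{e^{2\pi i\theta}:\theta\in[0,1]\}$ is the unit circle.
   Context: For a topological space $A$, $Homeo(A)$ denotes the group of all homeomorphisms $A\to A$ under composition. For a subgroup $G$ of $Homeo(A)$ (acting by $gx=g(x)$), a nonempty subset $Y\subseteq A$ is invariant if $g(y)\in Y$ for all $g\in G$, $y\in Y$. The height of $(G,A)$ is $h(G,A)=\sup\{n\geq 0:$ there exist distinct closed invariant subsets $Y_0\subset Y_1\subset\cdots\subset Y_n=A\}$ (possibly $+\infty$). Finally $P_h(A)=\{h(G,A): G \text{ is a subgroup of } Homeo(A)\}$. *)

theory Defs
  imports "HOL-Analysis.Analysis" "HOL-Library.Extended_Nat"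
begin

text \<open>Homeomorphisms of a topological space X, normalised to be the identity
  outside the carrier, so that Homeo X is faithfully the group of self-homeomorphisms
  (composition as group operation, id as unit).\<close>
definition Homeo :: "'a topology \<Rightarrow> ('a \<Rightarrow> 'a) set" where
  "Homeo X = {f. homeomorphic_map X X f \<and> (\<forall>x. x \<notin> topspace X \<longrightarrow> f x = x)}"

definition homeo_inv :: "'a topology \<Rightarrow> ('a \<Rightarrow> 'a) \<Rightarrow> 'a \<Rightarrow> 'a" where
  "homeo_inv X f = (\<lambda>y. if y \<in> topspace X then inv_into (topspace X) f y else y)"

definition homeo_subgroup :: "'a topology \<Rightarrow> ('a \<Rightarrow> 'a) set \<Rightarrow> bool" where
  "homeo_subgroup X G \<longleftrightarrow> G \<subseteq> Homeo X \<and> id \<in> G \<and>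
     (\<forall>f\<in>G. \<forall>g\<in>G. f \<circ> g \<in> G) \<and> (\<forall>f\<in>G. homeo_inv X f \<in> G)"

definition invariant_set :: "'a topology \<Rightarrow> ('a \<Rightarrow> 'a) set \<Rightarrow> 'a set \<Rightarrow> bool" where
  "invariant_set X G Y \<longleftrightarrow> Y \<noteq> {} \<and> Y \<subseteq> topspace X \<and> (\<forall>g\<in>G. \<forall>y\<in>Y. g y \<in> Y)"

definition height :: "('a \<Rightarrow> 'a) set \<Rightarrow> 'a topology \<Rightarrow> enat" where
  "height G X = Sup {enat n | n. \<exists>Y :: nat \<Rightarrow> 'a set.
      (\<forall>i\<le>n. closedin X (Y i) \<and> invariant_set X G (Y i)) \<and>
      (\<forall>i<n. Y i \<subset> Y (Suc i)) \<and> Y n = topspace X}"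

definition P_h :: "'a topology \<Rightarrow> enat set" where
  "P_h X = {height G X | G. homeo_subgroup X G}"

end

theory Submission
  imports Defs
begin


lemma Homeo_mk:
  fixes S :: "'a::topological_space set"
  assumes "continuous_on S f" "continuous_on S g" "f ` S \<subseteq> S" "g ` S \<subseteq> S"
    "\<And>x. x \<in> S \<Longrightarrow> g (f x) = x" "\<And>y. y \<in> S \<Longrightarrow> f (g y) = y"
    "\<And>x. x \<notin> S \<Longrightarrow> f x = x"
  shows "f \<in> Homeo (top_of_set S)"
proof -
  have "homeomorphic_maps (top_of_set S) (top_of_set S) f g"
    unfolding homeomorphic_maps_def using assms by auto
  then show ?thesis unfolding Homeo_def using assms(7) homeomorphic_maps_map by fastforce
qed

lemma Homeo_id: "id \<in> Homeo X"
  by (simp add: Homeo_def)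

lemma Homeo_comp: "f \<in> Homeo X \<Longrightarrow> g \<in> Homeo X \<Longrightarrow> f \<circ> g \<in> Homeo X"
  unfolding Homeo_def by (auto intro: homeomorphic_map_compose)

lemma Homeo_inv:
  assumes "f \<in> Homeo X"
  shows "homeo_inv X f \<in> Homeo X"
    "\<And>x. x \<in> topspace X \<Longrightarrow> homeo_inv X f (f x) = x"
    "\<And>y. y \<in> topspace X \<Longrightarrow> f (homeo_inv X f y) = y"
proof -
  have hm: "homeomorphic_map X X f" using assms by (simp add: Homeo_def)
  then obtain g where g: "homeomorphic_maps X X f g" using homeomorphic_map_maps by blast
  have inj: "inj_on f (topspace X)" using hm by (simp add: homeomorphic_map_def)
  have fx: "\<And>x. x \<in> topspace X \<Longrightarrow> f x \<in> topspace X" "\<And>y. y \<in> topspace X \<Longrightarrow> g y \<in> topspace X"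
    using g unfolding homeomorphic_maps_def continuous_map_def by auto
  have gf: "\<And>x. x \<in> topspace X \<Longrightarrow> g (f x) = x" and fg: "\<And>y. y \<in> topspace X \<Longrightarrow> f (g y) = y"
    using g unfolding homeomorphic_maps_def by auto
  have eq: "\<And>y. y \<in> topspace X \<Longrightarrow> homeo_inv X f y = g y"
    unfolding homeo_inv_def using inj fx gf fg by (metis inv_into_f_f)
  have "homeomorphic_map X X g" using g homeomorphic_maps_sym homeomorphic_maps_map by blast
  then have "homeomorphic_map X X (homeo_inv X f)" using eq homeomorphic_map_eq by metis
  then show "homeo_inv X f \<in> Homeo X" by (simp add: Homeo_def homeo_inv_def)
  show "\<And>x. x \<in> topspace X \<Longrightarrow> homeo_inv X f (f x) = x" using eq gf fx by simp
  show "\<And>y. y \<in> topspace X \<Longrightarrow> f (homeo_inv X f y) = y" using eq fg by simp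
qed

lemma stab_subgroup:
  "homeo_subgroup X {h \<in> Homeo X. \<forall>z\<in>topspace X. \<phi> (h z) = \<phi> z}"
proof -
  have "\<phi> (homeo_inv X h z) = \<phi> z" if "h \<in> Homeo X" "\<forall>z\<in>topspace X. \<phi> (h z) = \<phi> z" "z \<in> topspace X" for h z
  proof -
    have "homeo_inv X h z \<in> topspace X"
      using Homeo_inv(1)[OF that(1)] that(3) unfolding Homeo_def
      using homeomorphic_imp_surjective_map by blast
    then show ?thesis using that Homeo_inv(3)[OF that(1) that(3)] by metis
  qed
  moreover have "g z \<in> topspace X" if "g \<in> Homeo X" "z \<in> topspace X" for g z
    using that unfolding Homeo_def using homeomorphic_imp_surjective_map by blast
  ultimately show ?thesis unfolding homeo_subgroup_def
    by (auto simp: Homeo_id Homeo_comp Homeo_inv(1))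
qed

lemma chain_card:
  fixes J :: "nat \<Rightarrow> 'b set"
  assumes "finite A" "\<And>i. i \<le> n \<Longrightarrow> J i \<subseteq> A" "J 0 \<noteq> {}" "\<And>i. i < n \<Longrightarrow> J i \<subset> J (Suc i)"
  shows "n + 1 \<le> card A"
proof -
  have "i \<le> n \<Longrightarrow> i + 1 \<le> card (J i)" for i
  proof (induction i)
    case 0
    then show ?case using assms by (metis One_nat_def Suc_leI add_0 card_gt_0_iff finite_subset le0)
  next
    case (Suc i)
    then have "card (J i) < card (J (Suc i))"
      using assms by (meson Suc_le_lessD finite_subset psubset_card_mono)
    then show ?case using Suc by simp
  qed
  then have "n + 1 \<le> card (J n)" by simp
  also have "\<dots> \<le> card A" using assms by (simp add: card_mono)
  finally show ?thesis .
qed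

lemma height_eqI:
  fixes idx :: "'a \<Rightarrow> nat"
  assumes idx: "\<And>z. z \<in> topspace X \<Longrightarrow> idx z \<le> N"
  and tr: "\<And>z w. z \<in> topspace X \<Longrightarrow> w \<in> topspace X \<Longrightarrow> idx z = idx w \<Longrightarrow> \<exists>g\<in>G. g z = w"
  and ch: "(\<forall>i\<le>N. closedin X (Y i) \<and> invariant_set X G (Y i)) \<and>
      (\<forall>i<N. Y i \<subset> Y (Suc i)) \<and> Y N = topspace X"
  shows "height G X = enat N"
proof -
  have bound: "n \<le> N" if Z: "(\<forall>i\<le>n. closedin X (Z i) \<and> invariant_set X G (Z i)) \<and>
      (\<forall>i<n. Z i \<subset> Z (Suc i)) \<and> Z n = topspace X" for n Z
  proof -
    define J where "J i = idx ` Z i" for i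
    have sat: "Z i = {z \<in> topspace X. idx z \<in> J i}" if "i \<le> n" for i
    proof -
      have inv: "invariant_set X G (Z i)" using Z that by blast
      show ?thesis
      proof safe
        fix z assume "z \<in> Z i" then show "z \<in> topspace X" "idx z \<in> J i"
          using inv by (auto simp: invariant_set_def J_def)
      next
        fix z assume z: "z \<in> topspace X" "idx z \<in> J i"
        then obtain w where w: "w \<in> Z i" "idx w = idx z" by (auto simp: J_def)
        then have "w \<in> topspace X" using inv by (auto simp: invariant_set_def)
        then obtain g where "g \<in> G" "g w = z" using tr z w by metis
        then show "z \<in> Z i" using inv w by (auto simp: invariant_set_def)
      qed
    qed
    have "n + 1 \<le> card {0..N}"
    proof (rule chain_card[where J = J])
      show "J i \<subseteq> {0..N}" if "i \<le> n" for i
      proof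
        fix j assume "j \<in> J i"
        then obtain z where "z \<in> Z i" "j = idx z" by (auto simp: J_def)
        moreover have "Z i \<subseteq> topspace X" using Z that by (simp add: invariant_set_def)
        ultimately show "j \<in> {0..N}" using idx by auto
      qed
      show "J 0 \<noteq> {}" using Z by (auto simp: J_def invariant_set_def)
      show "J i \<subset> J (Suc i)" if "i < n" for i
      proof -
        have ss: "Z i \<subset> Z (Suc i)" using Z that by blast
        then have "J i \<subseteq> J (Suc i)" by (auto simp: J_def)
        moreover have "J i \<noteq> J (Suc i)"
          using sat[of i] sat[of "Suc i"] that ss by auto
        ultimately show ?thesis by blast
      qed
    qed simp
    then show ?thesis by simp
  qed
  have "height G X \<le> enat N"
    unfolding height_def by (rule Sup_least) (use bound in auto)
  moreover have "enat N \<le> height G X"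
    unfolding height_def by (rule Sup_upper) (use ch in blast)
  ultimately show ?thesis by simp
qed



definition phi :: "real \<Rightarrow> real \<Rightarrow> real" where
  "phi l t = l * t / (1 + (l - 1) * t)"

definition clip :: "real \<Rightarrow> real \<Rightarrow> real \<Rightarrow> real" where
  "clip p q x = max 0 (min 1 ((x - p) / (q - p)))"

definition psi :: "real \<Rightarrow> real \<Rightarrow> real \<Rightarrow> real \<Rightarrow> real" where
  "psi p q l x = x + (q - p) * (phi l (clip p q x) - clip p q x)"

lemma phi_den: "(l::real) > 0 \<Longrightarrow> 0 \<le> t \<Longrightarrow> t \<le> 1 \<Longrightarrow> 1 + (l - 1) * t > 0"
proof -
  assume a: "l > 0" "0 \<le> t" "t \<le> 1"
  have "(l - 1) * t = l * t - t" by (simp add: left_diff_distrib)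
  then have e: "1 + (l - 1) * t = (1 - t) + l * t" by linarith
  have "l * t \<ge> 0" using a by simp
  show ?thesis
  proof (cases "t < 1")
    case True then show ?thesis using e \<open>l * t \<ge> 0\<close> by linarith
  next
    case False then have "t = 1" using a by simp
    then show ?thesis using a by simp
  qed
qed

lemma phi_0 [simp]: "phi l 0 = 0" and phi_1 [simp]: "l > 0 \<Longrightarrow> phi l 1 = 1"
  by (auto simp: phi_def)

lemma phi_mono: "l > 0 \<Longrightarrow> 0 \<le> t \<Longrightarrow> t < t' \<Longrightarrow> t' \<le> 1 \<Longrightarrow> phi l t < phi l t'"
proof -
  assume a: "l > 0" "0 \<le> t" "t < t'" "t' \<le> 1"
  have d1: "1 + (l - 1) * t > 0" using phi_den[of l t] a by linarith
  have d2: "1 + (l - 1) * t' > 0" using phi_den a by simp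
  have eq: "l * t * (1 + (l - 1) * t') - l * t' * (1 + (l - 1) * t) = l * (t - t')"
    by (simp add: algebra_simps)
  have "l * (t - t') < 0" using a by (simp add: mult_pos_neg)
  then have "l * t * (1 + (l - 1) * t') < l * t' * (1 + (l - 1) * t)" using eq by linarith
  then show ?thesis unfolding phi_def using d1 d2 by (simp add: divide_simps)
qed

lemma phi_range: "l > 0 \<Longrightarrow> 0 \<le> t \<Longrightarrow> t \<le> 1 \<Longrightarrow> 0 \<le> phi l t \<and> phi l t \<le> 1"
proof -
  assume a: "l > 0" "0 \<le> t" "t \<le> 1"
  have "phi l 0 \<le> phi l t" using phi_mono[OF a(1), of 0 t] a by (cases "t = 0") auto
  moreover have "phi l t \<le> phi l 1" using phi_mono[OF a(1), of t 1] a by (cases "t = 1") auto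
  ultimately show ?thesis using a by simp
qed

lemma phi_inv: "l > 0 \<Longrightarrow> 0 \<le> t \<Longrightarrow> t \<le> 1 \<Longrightarrow> phi (1/l) (phi l t) = t"
proof -
  assume a: "l > 0" "0 \<le> t" "t \<le> 1"
  define D where "D = 1 + (l - 1) * t"
  have D: "D > 0" using phi_den a by (simp add: D_def)
  have p: "phi l t = l * t / D" by (simp add: phi_def D_def)
  have n: "1 / l * (l * t / D) = t / D" using a by simp
  have d: "1 + (1 / l - 1) * (l * t / D) = 1 / D"
  proof -
    have "(1 / l - 1) * l = 1 - l" using a by (simp add: field_simps)
    then have "(1 / l - 1) * (l * t / D) = ((1 / l - 1) * l) * t / D" by simp
    then have "(1 / l - 1) * (l * t / D) = (1 - l) * t / D" using \<open>(1 / l - 1) * l = 1 - l\<close> by simp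
    then have "(1 / l - 1) * (l * t / D) = (t - l * t) / D" by (simp add: left_diff_distrib)
    moreover have "D + (t - l * t) = 1" by (simp add: D_def algebra_simps)
    ultimately show ?thesis using D by (simp add: field_simps)
  qed
  show ?thesis unfolding phi_def[of "1/l"] p n d using D by simp
qed

lemma phi_hit:
  assumes "0 < a" "a < 1" "0 < b" "b < 1"
  shows "\<exists>l>0. phi l a = b"
proof -
  define l where "l = b * (1 - a) / (a * (1 - b))"
  have l: "l > 0" using assms by (simp add: l_def)
  have d: "1 + (l - 1) * a > 0" using phi_den[OF l, of a] assms by simp
  have la: "l * a * (1 - b) = b * (1 - a)" using assms unfolding l_def by simp
  have "l * a = b * (1 + (l - 1) * a)"
  proof -
    have "b * (1 + (l - 1) * a) = b * (1 - a) + b * l * a" by (simp add: algebra_simps)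
    also have "\<dots> = l * a * (1 - b) + b * l * a" using la by simp
    also have "\<dots> = l * a" by (simp add: algebra_simps)
    finally show ?thesis by simp
  qed
  then have "phi l a = b" unfolding phi_def using d by (simp add: divide_simps)
  then show ?thesis using l by blast
qed

lemma clip_range: "0 \<le> clip p q x \<and> clip p q x \<le> 1"
  by (simp add: clip_def)

lemma psi_cont: "l > 0 \<Longrightarrow> p < q \<Longrightarrow> continuous_on UNIV (psi p q l)"
proof -
  assume l: "l > 0" and pq: "p < q"
  have "continuous_on UNIV (clip p q)" unfolding clip_def using pq by (intro continuous_intros) auto
  moreover have "\<forall>x\<in>UNIV. 1 + (l - 1) * clip p q x \<noteq> 0"
    using phi_den[OF l] clip_range by (metis less_irrefl)
  ultimately show ?thesis unfolding psi_def phi_def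
    by (intro continuous_intros) auto
qed

lemma psi_out: "p < q \<Longrightarrow> l > 0 \<Longrightarrow> x \<notin> {p<..<q} \<Longrightarrow> psi p q l x = x"
proof -
  assume a: "p < q" "l > 0" "x \<notin> {p<..<q}"
  then consider "x \<le> p" | "x \<ge> q" by fastforce
  then have "clip p q x = 0 \<or> clip p q x = 1"
  proof cases
    case 1 then have "(x - p) / (q - p) \<le> 0" using a by (simp add: divide_simps)
    then show ?thesis by (simp add: clip_def)
  next
    case 2 then have "(x - p) / (q - p) \<ge> 1" using a by (simp add: divide_simps)
    then show ?thesis by (simp add: clip_def)
  qed
  then show ?thesis using a by (auto simp: psi_def)
qed

lemma psi_in_eq: "p < q \<Longrightarrow> x \<in> {p..q} \<Longrightarrow> psi p q l x = p + (q - p) * phi l ((x - p) / (q - p))"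
proof -
  assume a: "p < q" "x \<in> {p..q}"
  then have c: "clip p q x = (x - p) / (q - p)" by (auto simp: clip_def divide_simps)
  have "(q - p) * ((x - p) / (q - p)) = x - p" using a by simp
  then show ?thesis unfolding psi_def c by (simp add: right_diff_distrib)
qed

lemma psi_in: "p < q \<Longrightarrow> l > 0 \<Longrightarrow> x \<in> {p<..<q} \<Longrightarrow> psi p q l x \<in> {p<..<q}"
proof -
  assume a: "p < q" "l > 0" "x \<in> {p<..<q}"
  define t where "t = (x - p) / (q - p)"
  have t: "0 < t" "t < 1" using a by (auto simp: t_def divide_simps)
  have "phi l 0 < phi l t" "phi l t < phi l 1" using phi_mono[OF a(2), of 0 t] phi_mono[OF a(2), of t 1] t by auto
  then have f: "0 < phi l t" "phi l t < 1" using a by auto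
  have e: "psi p q l x = p + (q - p) * phi l t" using psi_in_eq[OF a(1), of x l] a by (simp add: t_def)
  have "(q - p) * phi l t > 0" using f a by simp
  moreover have "(q - p) * phi l t < (q - p)" using f a by simp
  ultimately show ?thesis using e by simp
qed

lemma psi_closed: "p < q \<Longrightarrow> l > 0 \<Longrightarrow> x \<in> {p..q} \<Longrightarrow> psi p q l x \<in> {p..q}"
proof (cases "x \<in> {p<..<q}")
  case True
  assume "p < q" "l > 0" "x \<in> {p..q}"
  then show ?thesis using psi_in[of p q l x] True by auto
next
  case False
  assume "p < q" "l > 0" "x \<in> {p..q}"
  then show ?thesis using psi_out[of p q l x] False by auto
qed

lemma psi_mono: "p < q \<Longrightarrow> l > 0 \<Longrightarrow> x < y \<Longrightarrow> psi p q l x < psi p q l y"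
proof -
  assume a: "p < q" "l > 0" "x < y"
  have r: "z \<in> {p..q} \<Longrightarrow> psi p q l z \<in> {p..q}" for z using psi_closed a by blast
  have o: "z \<notin> {p..q} \<Longrightarrow> psi p q l z = z" for z using psi_out[OF a(1,2), of z] by auto
  show ?thesis
  proof (cases "x \<in> {p..q} \<and> y \<in> {p..q}")
    case True
    have "phi l ((x - p) / (q - p)) < phi l ((y - p) / (q - p))"
      using True a by (intro phi_mono) (auto simp: divide_simps)
    then show ?thesis using psi_in_eq[OF a(1)] True a by simp
  next
    case False
    show ?thesis
    proof (cases "x \<in> {p..q}")
      case True
      then have "y > q" using False a by auto
      then show ?thesis using r[OF True] o[of y] by auto
    next
      case xo: False
      show ?thesis
      proof (cases "y \<in> {p..q}")
        case True
        then have "x < p" using xo a by auto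
        then show ?thesis using r[OF True] o[of x] by auto
      next
        case False then show ?thesis using o xo a by simp
      qed
    qed
  qed
qed

lemma psi_inv: "p < q \<Longrightarrow> l > 0 \<Longrightarrow> psi p q (1/l) (psi p q l x) = x"
proof (cases "x \<in> {p..q}")
  case True
  assume a: "p < q" "l > 0"
  define t where "t = (x - p) / (q - p)"
  have t: "0 \<le> t" "t \<le> 1" using a True by (auto simp: t_def divide_simps)
  have y: "psi p q l x = p + (q - p) * phi l t" using psi_in_eq[OF a(1) True] by (simp add: t_def)
  have yy: "psi p q l x \<in> {p..q}" using psi_closed a True by blast
  have tt: "(psi p q l x - p) / (q - p) = phi l t" using y a by simp
  have "psi p q (1/l) (psi p q l x) = p + (q - p) * phi (1/l) (phi l t)"
    using psi_in_eq[OF a(1) yy] tt by simp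
  also have "\<dots> = x" using phi_inv[OF a(2) t] a by (simp add: t_def)
  finally show ?thesis .
next
  case False
  assume a: "p < q" "l > 0"
  then show ?thesis using psi_out[OF a] psi_out[OF a(1), of "1/l"] False by auto
qed

lemma psi_hit:
  assumes "p < q" "a \<in> {p<..<q}" "b \<in> {p<..<q}"
  shows "\<exists>l>0. psi p q l a = b"
proof -
  obtain l where l: "l > 0" "phi l ((a - p) / (q - p)) = (b - p) / (q - p)"
    using phi_hit[of "(a - p) / (q - p)" "(b - p) / (q - p)"] assms by (auto simp: divide_simps)
  then show ?thesis using psi_in_eq[OF assms(1), of a l] assms by auto
qed



abbreviation C1 :: "complex set" where "C1 \<equiv> sphere 0 1"

lemma C1_iff: "z \<in> C1 \<longleftrightarrow> (Re z)\<^sup>2 + (Im z)\<^sup>2 = 1"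
  by (simp add: norm_complex_def)

lemma C1_Re: "z \<in> C1 \<Longrightarrow> Re z \<in> {-1..1}"
proof -
  assume "z \<in> C1"
  then have "(Re z)\<^sup>2 \<le> 1" using C1_iff by (metis le_add_same_cancel1 zero_le_power2)
  then show ?thesis using abs_square_le_1[of "Re z"] by auto
qed

lemma C1_upper: "z \<in> C1 \<Longrightarrow> Im z \<ge> 0 \<Longrightarrow> z = of_real (Re z) + \<i> * of_real (sqrt (1 - (Re z)\<^sup>2))"
proof -
  assume a: "z \<in> C1" "Im z \<ge> 0"
  then have "1 - (Re z)\<^sup>2 = (Im z)\<^sup>2" using C1_iff by (simp add: algebra_simps)
  then have "sqrt (1 - (Re z)\<^sup>2) = Im z" using a by simp
  then show ?thesis by (simp add: complex_eq_iff)
qed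

lemma C1_mk: "x \<in> {-1..1} \<Longrightarrow> of_real x + \<i> * of_real (sqrt (1 - x\<^sup>2)) \<in> C1"
proof -
  assume "x \<in> {-1..1}"
  then have "x\<^sup>2 \<le> 1" using abs_square_le_1[of x] by auto
  then show ?thesis unfolding C1_iff by simp
qed

lemma C1_Re_eq: "z \<in> C1 \<Longrightarrow> w \<in> C1 \<Longrightarrow> Re z = Re w \<Longrightarrow> w = z \<or> w = cnj z"
proof -
  assume a: "z \<in> C1" "w \<in> C1" "Re z = Re w"
  then have "(Im w)\<^sup>2 = (Im z)\<^sup>2" using C1_iff by (metis add_left_cancel)
  then have "Im w = Im z \<or> Im w = - Im z" using power2_eq_iff by blast
  then show ?thesis using a by (auto simp: complex_eq_iff)
qed

definition K :: "real \<Rightarrow> real \<Rightarrow> real \<Rightarrow> complex \<Rightarrow> complex" where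
  "K p q l z = (if z \<in> C1 \<and> Im z \<ge> 0 then
      of_real (psi p q l (Re z)) + \<i> * of_real (sqrt (1 - (psi p q l (Re z))\<^sup>2)) else z)"

locale Kparams =
  fixes p q l :: real
  assumes p: "-1 \<le> p" and pq: "p < q" and q: "q \<le> 1" and l: "l > 0"
begin

lemma psi_C1: "x \<in> {-1..1} \<Longrightarrow> psi p q l x \<in> {-1..1}"
proof (cases "x \<in> {p..q}")
  case True
  then show ?thesis using psi_closed[OF pq l True] p q by auto
next
  case False
  assume "x \<in> {-1..1}"
  then show ?thesis using psi_out[OF pq l, of x] False by auto
qed

lemma K_in: "z \<in> C1 \<Longrightarrow> K p q l z \<in> C1"
proof -
  assume z: "z \<in> C1"
  have "psi p q l (Re z) \<in> {-1..1}" using psi_C1 C1_Re z by blast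
  then have "of_real (psi p q l (Re z)) + \<i> * of_real (sqrt (1 - (psi p q l (Re z))\<^sup>2)) \<in> C1"
    by (rule C1_mk)
  note m = this
  moreover have "Im z \<ge> 0 \<Longrightarrow> K p q l z = of_real (psi p q l (Re z)) + \<i> * of_real (sqrt (1 - (psi p q l (Re z))\<^sup>2))"
    using z by (simp add: K_def)
  moreover have "\<not> Im z \<ge> 0 \<Longrightarrow> K p q l z = z" by (simp add: K_def)
  ultimately show ?thesis using z by metis
qed

lemma psi_sq: "z \<in> C1 \<Longrightarrow> (psi p q l (Re z))\<^sup>2 \<le> 1"
  using psi_C1[OF C1_Re] abs_square_le_1 by (metis abs_le_iff atLeastAtMost_iff minus_le_iff)

lemma K_upper: "z \<in> C1 \<Longrightarrow> Im z \<ge> 0 \<Longrightarrow> Im (K p q l z) \<ge> 0"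
  unfolding K_def using psi_sq by simp

lemma K_fix: "z \<in> C1 \<Longrightarrow> Re z \<notin> {p<..<q} \<Longrightarrow> K p q l z = z"
proof -
  assume a: "z \<in> C1" "Re z \<notin> {p<..<q}"
  have "psi p q l (Re z) = Re z" using psi_out[OF pq l a(2)] .
  then show ?thesis unfolding K_def using C1_upper[OF a(1)] by auto
qed

lemma K_Re_in: "z \<in> C1 \<Longrightarrow> Re z \<in> {p<..<q} \<Longrightarrow> Re (K p q l z) \<in> {p<..<q}"
  unfolding K_def using psi_in[OF pq l] by auto

lemma K_Re: "z \<in> C1 \<Longrightarrow> Im z \<ge> 0 \<Longrightarrow> Re (K p q l z) = psi p q l (Re z)"
  unfolding K_def by simp

end

lemma Kparams_inv: "Kparams p q l \<Longrightarrow> Kparams p q (1/l)"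
  unfolding Kparams_def by auto

lemma K_inv:
  assumes "Kparams p q l" "z \<in> C1"
  shows "K p q (1/l) (K p q l z) = z"
proof (cases "Im z \<ge> 0")
  case True
  interpret Kparams p q l by fact
  have w: "K p q l z \<in> C1" "Im (K p q l z) \<ge> 0" using K_in K_upper assms True by auto
  have "K p q (1/l) (K p q l z) = of_real (psi p q (1/l) (psi p q l (Re z))) +
     \<i> * of_real (sqrt (1 - (psi p q (1/l) (psi p q l (Re z)))\<^sup>2))"
    using w K_Re[OF assms(2) True] by (simp add: K_def)
  also have "\<dots> = z" using psi_inv[OF pq l] C1_upper[OF assms(2) True] by simp
  finally show ?thesis .
next
  case False
  then show ?thesis by (simp add: K_def)
qed

lemma K_cont:
  assumes "Kparams p q l"
  shows "continuous_on C1 (K p q l)"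
proof -
  interpret Kparams p q l by fact
  let ?F = "\<lambda>z. of_real (psi p q l (Re z)) + \<i> * of_real (sqrt (1 - (psi p q l (Re z))\<^sup>2))"
  have cpsi: "continuous_on UNIV (psi p q l)" using psi_cont[OF l pq] .
  have cF: "continuous_on A ?F" for A
  proof -
    have "continuous_on A (\<lambda>z. psi p q l (Re z))"
      by (rule continuous_on_compose2[OF cpsi]) (auto intro: continuous_intros)
    then show ?thesis by (intro continuous_intros)
  qed
  have closed1: "closed (C1 \<inter> {z. Im z \<ge> 0})" "closed (C1 \<inter> {z. Im z \<le> 0})"
    by (intro closed_Int closed_sphere closed_Collect_le continuous_intros)+
  have "continuous_on ((C1 \<inter> {z. Im z \<ge> 0}) \<union> (C1 \<inter> {z. Im z \<le> 0}))
      (\<lambda>z. if Im z \<ge> 0 then ?F z else z)"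
  proof (rule continuous_on_cases[OF closed1 cF continuous_on_id], intro allI impI)
    fix z assume "z \<in> C1 \<inter> {z. 0 \<le> Im z} \<and> \<not> 0 \<le> Im z \<or> z \<in> C1 \<inter> {z. Im z \<le> 0} \<and> 0 \<le> Im z"
    then have z: "z \<in> C1" "Im z = 0" by auto
    then have "Re z \<notin> {p<..<q}"
      using C1_iff[of z] p q by (auto simp: power2_eq_1_iff)
    then have "K p q l z = z" using K_fix z by blast
    then show "?F z = z" using z by (simp add: K_def)
  qed
  moreover have "(C1 \<inter> {z. Im z \<ge> 0}) \<union> (C1 \<inter> {z. Im z \<le> 0}) = C1" by auto
  ultimately have "continuous_on C1 (\<lambda>z. if Im z \<ge> 0 then ?F z else z)" by simp
  then show ?thesis by (rule continuous_on_cong[THEN iffD1, rotated 2]) (auto simp: K_def)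
qed

lemma K_Homeo:
  assumes "Kparams p q l"
  shows "K p q l \<in> Homeo (top_of_set C1)"
proof (rule Homeo_mk[where g = "K p q (1/l)"])
  have a2: "Kparams p q (1/l)" using Kparams_inv assms .
  show "continuous_on C1 (K p q l)" "continuous_on C1 (K p q (1/l))" using K_cont assms a2 by auto
  show "K p q l ` C1 \<subseteq> C1" "K p q (1/l) ` C1 \<subseteq> C1"
    using Kparams.K_in assms a2 by blast+
  show "K p q (1/l) (K p q l x) = x" if "x \<in> C1" for x using K_inv assms that by blast
  show "K p q l (K p q (1/l) y) = y" if "y \<in> C1" for y using K_inv[OF a2 that] by simp
  show "K p q l x = x" if "x \<notin> C1" for x using that by (simp add: K_def)
qed

definition rot :: "complex \<Rightarrow> complex \<Rightarrow> complex" where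
  "rot u z = (if z \<in> C1 then u * z else z)"

lemma rot_Homeo: "cmod u = 1 \<Longrightarrow> rot u \<in> Homeo (top_of_set C1)"
proof (rule Homeo_mk[where g = "rot (cnj u)"])
  assume u: "cmod u = 1"
  have uu: "cnj u * u = 1" "u * cnj u = 1" using u
    using complex_norm_square[of u] by (simp_all add: mult.commute)
  show "continuous_on C1 (rot u)" "continuous_on C1 (rot (cnj u))"
    by (auto simp: rot_def intro!: continuous_on_cong[THEN iffD1, OF refl _ continuous_on_mult_left[OF continuous_on_id]])
  show "rot u ` C1 \<subseteq> C1" "rot (cnj u) ` C1 \<subseteq> C1" using u by (auto simp: rot_def norm_mult)
  show "rot (cnj u) (rot u x) = x" if "x \<in> C1" for x
    using that u uu by (auto simp: rot_def norm_mult mult.assoc[symmetric])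
  show "rot u (rot (cnj u) x) = x" if "x \<in> C1" for x
    using that u uu by (auto simp: rot_def norm_mult mult.assoc[symmetric])
  show "rot u x = x" if "x \<notin> C1" for x using that by (simp add: rot_def)
qed

definition sig :: "complex \<Rightarrow> complex" where
  "sig z = (if z \<in> C1 then cnj z else z)"

lemma sig_Homeo: "sig \<in> Homeo (top_of_set C1)"
proof (rule Homeo_mk[where g = sig])
  show "continuous_on C1 sig"
    by (rule continuous_on_cong[THEN iffD1, OF refl _ continuous_on_cnj[OF continuous_on_id]]) (auto simp: sig_def)
  then show "continuous_on C1 sig" .
  show "sig ` C1 \<subseteq> C1" by (auto simp: sig_def)
  then show "sig ` C1 \<subseteq> C1" .
  show "sig (sig x) = x" if "x \<in> C1" for x using that by (auto simp: sig_def)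
  then show "sig (sig x) = x" if "x \<in> C1" for x using that by blast
  show "sig x = x" if "x \<notin> C1" for x using that by (simp add: sig_def)
qed



definition blk :: "real \<Rightarrow> nat" where
  "blk s = (if s \<in> \<int> then nat (2 * \<lfloor>s\<rfloor>) else nat (2 * \<lfloor>s\<rfloor> + 1))"

lemma blk_int: "blk (real m) = 2 * m"
  by (simp add: blk_def)

lemma blk_nonint: "real k < s \<Longrightarrow> s < real k + 1 \<Longrightarrow> blk s = 2 * k + 1"
proof -
  assume a: "real k < s" "s < real k + 1"
  have f: "\<lfloor>s\<rfloor> = int k" using a by (simp add: floor_eq_iff)
  have "s \<notin> \<int>"
  proof
    assume "s \<in> \<int>"
    then have "s = of_int \<lfloor>s\<rfloor>" by (simp add: Ints_def)
    then show False using a f by simp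
  qed
  then show ?thesis using f by (simp add: blk_def nat_add_distrib nat_mult_distrib)
qed

lemma blk_cases:
  assumes "s \<ge> 0"
  obtains m where "s = real m" "blk s = 2 * m"
  | k where "real k < s" "s < real k + 1" "blk s = 2 * k + 1"
proof (cases "s \<in> \<int>")
  case True
  then obtain i where i: "s = of_int i" by (auto elim: Ints_cases)
  then have "i \<ge> 0" using assms by simp
  then have "s = real (nat i)" using i by simp
  then show ?thesis using that(1) blk_int by metis
next
  case False
  define k where "k = nat \<lfloor>s\<rfloor>"
  have k: "real k = of_int \<lfloor>s\<rfloor>" using assms by (simp add: k_def)
  have "of_int \<lfloor>s\<rfloor> \<noteq> s" using False by (metis Ints_of_int)
  then have "real k < s" using k by (metis of_int_floor_le order_le_neq_trans)
  moreover have "s < real k + 1" using k by linarith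
  ultimately show ?thesis using that(2) blk_nonint by metis
qed

lemma blk_even: "s \<ge> 0 \<Longrightarrow> blk s = 2 * m \<Longrightarrow> s = real m"
  by (erule blk_cases) (auto, presburger)

lemma blk_odd: "s \<ge> 0 \<Longrightarrow> blk s = 2 * k + 1 \<Longrightarrow> real k < s \<and> s < real k + 1"
proof (erule blk_cases)
  fix m assume "blk s = 2 * k + 1" "blk s = 2 * m"
  then have "2 * k + 1 = 2 * m" by simp
  then show ?thesis by presburger
next
  fix k' assume "blk s = 2 * k + 1" "real k' < s" "s < real k' + 1" "blk s = 2 * k' + 1"
  then show ?thesis by simp
qed

lemma blk_le: "s \<ge> 0 \<Longrightarrow> blk s \<le> 2 * t \<longleftrightarrow> s \<le> real t"
proof (erule blk_cases)
  fix m assume "s = real m" "blk s = 2 * m" then show ?thesis by simp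
next
  fix k assume a: "real k < s" "s < real k + 1" "blk s = 2 * k + 1"
  have "k < t \<longleftrightarrow> s \<le> real t"
  proof
    assume "k < t" then have "real k + 1 \<le> real t" by simp
    then show "s \<le> real t" using a by linarith
  next
    assume "s \<le> real t" then have "real k < real t" using a by linarith
    then show "k < t" by simp
  qed
  then show ?thesis using a by auto
qed

lemma blk_bound: "s \<ge> 0 \<Longrightarrow> 2 * s \<le> real N \<Longrightarrow> blk s \<le> N"
proof (erule blk_cases)
  fix m assume "s = real m" "blk s = 2 * m" "2 * s \<le> real N" then show ?thesis by simp
next
  fix k assume a: "real k < s" "blk s = 2 * k + 1" "2 * s \<le> real N"
  then have "real (2 * k) < real N" by simp
  then show ?thesis using a by simp
qed

definition sN :: "nat \<Rightarrow> complex \<Rightarrow> real" where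
  "sN N z = real N * (1 - Re z) / 4"

definition idx :: "nat \<Rightarrow> complex \<Rightarrow> nat" where
  "idx N z = blk (sN N z)"

lemma sN_range: "z \<in> C1 \<Longrightarrow> 0 \<le> sN N z \<and> 2 * sN N z \<le> real N"
proof -
  assume "z \<in> C1"
  then have "Re z \<in> {-1..1}" by (rule C1_Re)
  then have "1 - Re z \<le> 2" "0 \<le> 1 - Re z" by auto
  then have "real N * (1 - Re z) \<le> real N * 2" "0 \<le> real N * (1 - Re z)"
    by (auto intro: mult_left_mono)
  then show ?thesis by (auto simp: sN_def)
qed

lemma idx_bound: "z \<in> C1 \<Longrightarrow> idx N z \<le> N"
  using sN_range blk_bound idx_def by metis

lemma cont_sN: "continuous_on A (sN N)"
  unfolding sN_def by (intro continuous_intros) auto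

lemma idx_witness:
  assumes "N > 0" "j \<le> N"
  shows "\<exists>z\<in>C1. idx N z = j"
proof -
  have ex: "\<exists>z\<in>C1. sN N z = v" if "0 \<le> v" "2 * v \<le> real N" for v
  proof -
    define x where "x = 1 - 4 * v / real N"
    have "x \<in> {-1..1}" using that assms by (auto simp: x_def divide_simps)
    then have "of_real x + \<i> * of_real (sqrt (1 - x\<^sup>2)) \<in> C1" by (rule C1_mk)
    moreover have "sN N (of_real x + \<i> * of_real (sqrt (1 - x\<^sup>2))) = v"
      using assms by (simp add: sN_def x_def)
    ultimately show ?thesis by blast
  qed
  show ?thesis
  proof (cases "even j")
    case True
    then obtain m where m: "j = 2 * m" by blast
    then obtain z where "z \<in> C1" "sN N z = real m" using ex[of "real m"] assms by auto
    then show ?thesis using m blk_int idx_def by metis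
  next
    case False
    then obtain k where k: "j = 2 * k + 1" by (metis oddE)
    then obtain z where "z \<in> C1" "sN N z = real k + 1/2" using ex[of "real k + 1/2"] assms by auto
    moreover have "blk (real k + 1/2) = 2 * k + 1" by (rule blk_nonint) auto
    ultimately show ?thesis using k idx_def by metis
  qed
qed



abbreviation XX :: "complex topology" where "XX \<equiv> top_of_set C1"

definition GN :: "nat \<Rightarrow> (complex \<Rightarrow> complex) set" where
  "GN N = {h \<in> Homeo XX. \<forall>z\<in>topspace XX. idx N (h z) = idx N z}"

lemma GN_sub: "homeo_subgroup XX (GN N)"
  unfolding GN_def by (rule stab_subgroup)

lemma Homeo_C1: "h \<in> Homeo XX \<Longrightarrow> z \<in> C1 \<Longrightarrow> h z \<in> C1"
  unfolding Homeo_def using homeomorphic_imp_surjective_map by fastforce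

lemma GN_mem: "h \<in> GN N \<Longrightarrow> z \<in> C1 \<Longrightarrow> h z \<in> C1 \<and> idx N (h z) = idx N z"
  unfolding GN_def using Homeo_C1 by auto

definition orb :: "nat \<Rightarrow> complex \<Rightarrow> complex \<Rightarrow> bool" where
  "orb N z w \<longleftrightarrow> (\<exists>g\<in>GN N. g z = w)"

lemma orb_refl: "orb N z z"
  using GN_sub unfolding orb_def homeo_subgroup_def by (metis id_apply)

lemma orb_trans: "orb N z w \<Longrightarrow> orb N w v \<Longrightarrow> orb N z v"
  using GN_sub unfolding orb_def homeo_subgroup_def by (metis comp_apply)

lemma orb_sym: "z \<in> C1 \<Longrightarrow> orb N z w \<Longrightarrow> orb N w z"
proof -
  assume z: "z \<in> C1" and "orb N z w"
  then obtain g where g: "g \<in> GN N" "g z = w" by (auto simp: orb_def)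
  then have "homeo_inv XX g \<in> GN N" using GN_sub by (auto simp: homeo_subgroup_def)
  moreover have "homeo_inv XX g w = z"
    using g z Homeo_inv(2)[of g XX z] by (auto simp: GN_def)
  ultimately show ?thesis by (auto simp: orb_def)
qed

lemma sig_GN: "sig \<in> GN N"
  unfolding GN_def using sig_Homeo by (auto simp: idx_def sN_def sig_def)

lemma K_GN:
  assumes "Kparams p q l" "\<And>x. x \<in> {p<..<q} \<Longrightarrow> blk (real N * (1 - x) / 4) = j"
  shows "K p q l \<in> GN N"
proof -
  interpret Kparams p q l by fact
  have "idx N (K p q l z) = idx N z" if z: "z \<in> C1" for z
  proof (cases "Re z \<in> {p<..<q}")
    case True
    then have "Re (K p q l z) \<in> {p<..<q}" using K_Re_in z by blast
    then show ?thesis using True assms(2) by (simp add: idx_def sN_def)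
  next
    case False
    then show ?thesis using K_fix z by simp
  qed
  then show ?thesis unfolding GN_def using K_Homeo[OF assms(1)] by auto
qed

definition up :: "complex \<Rightarrow> complex" where
  "up z = (if Im z \<ge> 0 then z else cnj z)"

lemma up_orb: "z \<in> C1 \<Longrightarrow> orb N z (up z) \<and> up z \<in> C1 \<and> Re (up z) = Re z \<and> Im (up z) \<ge> 0"
proof -
  assume z: "z \<in> C1"
  have "orb N z (up z)"
  proof (cases "Im z \<ge> 0")
    case True then show ?thesis using orb_refl by (simp add: up_def)
  next
    case False
    have "sig z = up z" using z False by (simp add: sig_def up_def)
    then show ?thesis using sig_GN orb_def by metis
  qed
  then show ?thesis using z by (auto simp: up_def)
qed

lemma interval_orb:
  assumes "Kparams p q 1" "\<And>x. x \<in> {p<..<q} \<Longrightarrow> blk (real N * (1 - x) / 4) = j"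
    and z: "z \<in> C1" "Re z \<in> {p<..<q}" and w: "w \<in> C1" "Re w \<in> {p<..<q}"
  shows "orb N z w"
proof -
  have pq: "p < q" and pr: "-1 \<le> p" "q \<le> 1" using assms(1) by (auto simp: Kparams_def)
  obtain l where l: "l > 0" "psi p q l (Re z) = Re w" using psi_hit[OF pq] z w by blast
  have kp: "Kparams p q l" using assms(1) l by (auto simp: Kparams_def)
  have uz: "orb N z (up z)" "up z \<in> C1" "Re (up z) = Re z" "Im (up z) \<ge> 0" using up_orb z by auto
  have uw: "orb N w (up w)" "up w \<in> C1" "Re (up w) = Re w" "Im (up w) \<ge> 0" using up_orb w by auto
  have "K p q l (up z) = of_real (Re w) + \<i> * of_real (sqrt (1 - (Re w)\<^sup>2))"
    using uz l by (simp add: K_def)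
  also have "\<dots> = up w" using C1_upper[OF uw(2) uw(4)] uw(3) by simp
  finally have "orb N (up z) (up w)" unfolding orb_def using K_GN[OF kp assms(2)] by blast
  then have "orb N z (up w)" using uz(1) orb_trans by blast
  moreover have "orb N (up w) w" using orb_sym[OF w(1) uw(1)] .
  ultimately show ?thesis using orb_trans by blast
qed

lemma even_orb:
  assumes "N > 0" "z \<in> C1" "w \<in> C1" "idx N z = 2 * m" "idx N w = 2 * m"
  shows "orb N z w"
proof -
  have "sN N z = real m" "sN N w = real m"
    using assms blk_even sN_range unfolding idx_def by metis+
  then have "real N * (1 - Re z) = real N * (1 - Re w)" by (simp add: sN_def)
  then have "Re z = Re w" using assms(1) by simp
  then have "w = z \<or> w = cnj z" using C1_Re_eq assms by blast
  then show ?thesis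
  proof
    assume "w = z" then show ?thesis by (simp add: orb_refl)
  next
    assume "w = cnj z" then have "sig z = w" using assms by (simp add: sig_def)
    then show ?thesis using sig_GN orb_def by metis
  qed
qed

lemma odd_Re:
  assumes "N > 0" "z \<in> C1" "idx N z = 2 * k + 1"
  shows "Re z < 1 - 4 * real k / real N" "Re z > 1 - 4 * (real k + 1) / real N"
proof -
  have s: "real k < sN N z" "sN N z < real k + 1"
    using assms blk_odd sN_range unfolding idx_def by metis+
  then have "4 * real k < real N * (1 - Re z)" "real N * (1 - Re z) < 4 * (real k + 1)"
    by (auto simp: sN_def)
  then show "Re z < 1 - 4 * real k / real N" "Re z > 1 - 4 * (real k + 1) / real N"
    using assms(1) by (auto simp: field_simps)
qed

lemma region_idx:
  assumes N: "real N = 2 * real k + 1" and z: "z \<in> C1" "Re z \<le> 0"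
    and y: "Im z \<in> {-1 / real N<..<1 / real N}"
  shows "idx N z = N"
proof -
  define e where "e = 1 / real N"
  have e: "0 < e" "e \<le> 1" "real N * e = 1" using N by (auto simp: e_def)
  have "\<bar>Im z\<bar> < e" using y by (auto simp: e_def)
  then have "\<bar>Im z\<bar>\<^sup>2 < e\<^sup>2" by (intro power_strict_mono) auto
  then have "(Im z)\<^sup>2 < e\<^sup>2" by simp
  moreover have "e\<^sup>2 \<le> e" using e by (simp add: power2_eq_square mult_le_cancel_left1)
  moreover have "(Re z)\<^sup>2 + (Im z)\<^sup>2 = 1" using C1_iff z by blast
  ultimately have "(Re z)\<^sup>2 > 1 - e" by linarith
  moreover have "(Re z)\<^sup>2 \<le> - Re z"
  proof -
    have "Re z \<ge> -1" using C1_Re z by auto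
    then have "(- Re z) * (- Re z) \<le> (- Re z) * 1" using z by (intro mult_left_mono) auto
    then show ?thesis by (simp add: power2_eq_square)
  qed
  ultimately have x: "1 - Re z > 2 - e" by linarith
  have "real N * (2 - e) < real N * (1 - Re z)" using x N by simp
  then have "4 * real k < real N * (1 - Re z)" using N e by (simp add: algebra_simps)
  then have "real k < sN N z" by (simp add: sN_def)
  moreover have "2 * sN N z \<le> real N" using sN_range z by blast
  then have "sN N z < real k + 1" using N by linarith
  ultimately have "blk (sN N z) = 2 * k + 1" by (rule blk_nonint)
  then show ?thesis using N unfolding idx_def by linarith
qed

definition Lmap :: "nat \<Rightarrow> real \<Rightarrow> complex \<Rightarrow> complex" where
  "Lmap N l = rot \<i> \<circ> K (- 1 / real N) (1 / real N) l \<circ> rot (- \<i>)"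

lemma Lmap_GN:
  assumes N: "real N = 2 * real k + 1" and l: "l > 0"
  shows "Lmap N l \<in> GN N"
proof -
  define e where "e = 1 / real N"
  have e: "0 < e" "e \<le> 1" using N by (auto simp: e_def)
  have kp: "Kparams (-e) e l" using e l by (auto simp: Kparams_def)
  interpret Kparams "-e" e l by (rule kp)
  have r1: "rot \<i> \<in> Homeo XX" using rot_Homeo by simp
  have r2: "rot (- \<i>) \<in> Homeo XX" using rot_Homeo by simp
  have k: "K (-1/real N) (1/real N) l \<in> Homeo XX" using K_Homeo[OF kp] by (simp add: e_def)
  have H: "Lmap N l \<in> Homeo XX"
    unfolding Lmap_def by (intro Homeo_comp r1 r2 k)
  have "idx N (Lmap N l z) = idx N z" if z: "z \<in> C1" for z
  proof -
    define w where "w = - \<i> * z"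
    have w: "w \<in> C1" "Re w = Im z" "Im w = - Re z" using z by (auto simp: w_def norm_mult)
    have Lz: "Lmap N l z = \<i> * K (-e) e l w"
      using z w K_in[OF w(1)] by (simp add: Lmap_def rot_def w_def e_def)
    show ?thesis
    proof (cases "K (-e) e l w = w")
      case True
      then show ?thesis using Lz by (simp add: w_def)
    next
      case False
      then have r: "Re w \<in> {-e<..<e}" using K_fix w by blast
      have i: "Im w \<ge> 0" using False by (auto simp: K_def split: if_splits)
      have "idx N z = N" using region_idx[OF N z] r i w by (simp add: e_def)
      moreover
      have kw: "K (-e) e l w \<in> C1" "Re (K (-e) e l w) \<in> {-e<..<e}" "Im (K (-e) e l w) \<ge> 0"
        using K_in K_Re_in K_upper w r i by auto
      then have "Lmap N l z \<in> C1" "Re (Lmap N l z) \<le> 0" "Im (Lmap N l z) \<in> {-e<..<e}"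
        using Lz by (auto simp: norm_mult)
      then have "idx N (Lmap N l z) = N" using region_idx[OF N] by (simp add: e_def)
      ultimately show ?thesis by simp
    qed
  qed
  then show ?thesis unfolding GN_def using H by auto
qed

lemma Lmap_moves:
  assumes N: "real N = 2 * real k + 1"
  shows "\<exists>l>0. Lmap N l (-1) \<noteq> -1"
proof -
  define e where "e = 1 / real N"
  have e: "0 < e" "e \<le> 1" using N by (auto simp: e_def)
  obtain l where l: "l > 0" "psi (-e) e l 0 = e / 2" using psi_hit[of "-e" e 0 "e/2"] e by auto
  have kp: "Kparams (-e) e l" using e l by (auto simp: Kparams_def)
  have m1: "(-1::complex) \<in> C1" "\<i> \<in> C1" by auto
  have "Lmap N l (-1) = \<i> * K (-e) e l \<i>"
    using m1 Kparams.K_in[OF kp m1(2)] by (simp add: Lmap_def rot_def e_def)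
  moreover have "Re (K (-e) e l \<i>) = e / 2" using Kparams.K_Re[OF kp m1(2)] l by simp
  ultimately have "Im (Lmap N l (-1)) = e / 2" by simp
  moreover have "e / 2 \<noteq> 0" using e by simp
  ultimately have "Lmap N l (-1) \<noteq> -1" by (metis Im_complex_of_real of_real_1 of_real_minus)
  then show ?thesis using l by blast
qed

lemma odd_orb:
  assumes N: "N > 0" and z: "z \<in> C1" "idx N z = 2 * k + 1"
  shows "\<exists>z'. orb N z z' \<and> z' \<in> C1 \<and> Re z' \<in> {max (-1) (1 - 4 * (real k + 1) / real N)<..<1 - 4 * real k / real N}"
proof (cases "Re z = -1")
  case False
  then have "Re z > -1" using C1_Re z by force
  then show ?thesis using odd_Re[OF N z] z orb_refl by auto
next
  case True
  then have zm: "z = -1" using z C1_iff[of z] by (simp add: complex_eq_iff)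
  have "real k < sN N z" "sN N z < real k + 1"
    using z blk_odd sN_range unfolding idx_def by metis+
  then have "real (2 * k) < real N" "real N < real (2 * k + 2)" using zm by (simp_all add: sN_def)
  then have "2 * k < N" "N < 2 * k + 2" by (simp_all only: of_nat_less_iff)
  then have "N = 2 * k + 1" by linarith
  then have "real N = 2 * real k + 1" by simp
  then obtain l where l: "l > 0" "Lmap N l (-1) \<noteq> -1" using Lmap_moves by blast
  have g: "Lmap N l \<in> GN N" using Lmap_GN[OF \<open>real N = _\<close> l(1)] .
  define z' where "z' = Lmap N l (-1)"
  have z': "z' \<in> C1" "idx N z' = 2 * k + 1" using GN_mem[OF g, of "-1"] z zm by (auto simp: z'_def)
  have "Re z' \<noteq> -1"
  proof
    assume "Re z' = -1" then have "z' = -1" using z' C1_iff[of z'] by (simp add: complex_eq_iff)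
    then show False using l by (simp add: z'_def)
  qed
  then have "Re z' > -1" using C1_Re z' by force
  moreover have "orb N z z'" using g zm by (auto simp: orb_def z'_def)
  ultimately show ?thesis using odd_Re[OF N z'] z' by auto
qed

lemma GN_trans:
  assumes N: "N > 0" and z: "z \<in> C1" and w: "w \<in> C1" and eq: "idx N z = idx N w"
  shows "\<exists>g\<in>GN N. g z = w"
proof -
  have "orb N z w"
  proof (cases "even (idx N z)")
    case True
    then obtain m where "idx N z = 2 * m" by blast
    then show ?thesis using even_orb[OF N z w] eq by simp
  next
    case False
    then obtain k where k: "idx N z = 2 * k + 1" by (metis oddE)
    define p where "p = max (-1) (1 - 4 * (real k + 1) / real N)"
    define q where "q = 1 - 4 * real k / real N"
    obtain z' where z': "orb N z z'" "z' \<in> C1" "Re z' \<in> {p<..<q}"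
      using odd_orb[OF N z k] by (auto simp: p_def q_def)
    obtain w' where w': "orb N w w'" "w' \<in> C1" "Re w' \<in> {p<..<q}"
      using odd_orb[OF N w] k eq by (auto simp: p_def q_def)
    have kp: "Kparams p q 1"
      using z'(3) unfolding Kparams_def p_def q_def by auto
    have bl: "blk (real N * (1 - x) / 4) = 2 * k + 1" if "x \<in> {p<..<q}" for x
    proof (rule blk_nonint)
      have "x < 1 - 4 * real k / real N" "x > 1 - 4 * (real k + 1) / real N"
        using that by (auto simp: p_def q_def)
      then have "4 * real k < real N * (1 - x)" "real N * (1 - x) < 4 * (real k + 1)"
        using N by (auto simp: field_simps)
      then show "real k < real N * (1 - x) / 4" "real N * (1 - x) / 4 < real k + 1" by auto
    qed
    have "orb N z' w'" using interval_orb[OF kp bl z'(2,3) w'(2,3)] by blast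
    then have "orb N z w'" using z'(1) orb_trans by blast
    moreover have "orb N w' w" using orb_sym[OF w w'(1)] .
    ultimately show ?thesis using orb_trans by blast
  qed
  then show ?thesis by (simp add: orb_def)
qed



definition AN :: "nat \<Rightarrow> nat \<Rightarrow> nat set" where
  "AN N i = (if even i \<or> i = N then {..i} else {..Suc i} - {i})"

definition YN :: "nat \<Rightarrow> nat \<Rightarrow> complex set" where
  "YN N i = {z \<in> C1. idx N z \<in> AN N i}"

lemma AN_mono: "i < N \<Longrightarrow> AN N i \<subseteq> AN N (Suc i)"
  by (auto simp: AN_def)

lemma AN_new: "i < N \<Longrightarrow> \<exists>j\<le>N. j \<in> AN N (Suc i) \<and> j \<notin> AN N i"
proof -
  assume i: "i < N"
  show ?thesis
  proof (cases "even i")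
    case True
    show ?thesis
    proof (cases "Suc i = N")
      case True
      then show ?thesis using \<open>even i\<close> by (intro exI[of _ N]) (auto simp: AN_def)
    next
      case False
      then have "Suc (Suc i) \<le> N" using i by simp
      then show ?thesis using \<open>even i\<close> False by (intro exI[of _ "Suc (Suc i)"]) (auto simp: AN_def)
    qed
  next
    case False
    then show ?thesis using i by (intro exI[of _ i]) (auto simp: AN_def)
  qed
qed

lemma idx_one: "idx N 1 = 0"
  using blk_int[of 0] by (simp add: idx_def sN_def)

lemma closed_le: "closed {z. sN N z \<le> c}" and closed_eq: "closed {z. sN N z = c}"
  by (intro closed_Collect_le closed_Collect_eq cont_sN continuous_on_const)+

lemma YN_closed:
  assumes N: "N > 0" and i: "i \<le> N"
  shows "closedin XX (YN N i)"
proof -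
  have s0: "z \<in> C1 \<Longrightarrow> sN N z \<ge> 0" for z using sN_range by blast
  have le: "z \<in> C1 \<Longrightarrow> idx N z \<le> 2 * t \<longleftrightarrow> sN N z \<le> real t" for z t
    unfolding idx_def using blk_le s0 by blast
  have eq: "z \<in> C1 \<Longrightarrow> idx N z = 2 * t \<longleftrightarrow> sN N z = real t" for z t
    unfolding idx_def using blk_even s0 blk_int by metis
  consider "i = N" | "even i" "i \<noteq> N" | "odd i" "i \<noteq> N" by blast
  then show ?thesis
  proof cases
    case 1
    then have "YN N i = C1" using idx_bound by (auto simp: YN_def AN_def)
    then show ?thesis by simp
  next
    case 2
    then obtain t where t: "i = 2 * t" by blast
    have "YN N i = C1 \<inter> {z. sN N z \<le> real t}"
      using 2 t le by (auto simp: YN_def AN_def)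
    then show ?thesis using closed_le closedin_closed_Int by metis
  next
    case 3
    then obtain t where t: "i = 2 * t + 1" by (metis oddE)
    have "idx N z \<in> AN N i \<longleftrightarrow> idx N z \<le> 2 * t \<or> idx N z = 2 * (t + 1)" for z
      using 3 t by (auto simp: AN_def)
    then have "YN N i = C1 \<inter> ({z. sN N z \<le> real t} \<union> {z. sN N z = real (t + 1)})"
      using le eq unfolding YN_def by blast
    then show ?thesis using closed_le closed_eq closedin_closed_Int closed_Un by metis
  qed
qed

lemma YN_inv: "invariant_set XX (GN N) (YN N i)"
proof -
  have "1 \<in> YN N i" using idx_one by (auto simp: YN_def AN_def intro: odd_pos)
  moreover have "g y \<in> YN N i" if "g \<in> GN N" "y \<in> YN N i" for g y
    using GN_mem[OF that(1)] that(2) by (auto simp: YN_def)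
  moreover have "YN N i \<subseteq> C1" by (auto simp: YN_def)
  ultimately show ?thesis unfolding invariant_set_def by auto
qed

lemma YN_strict:
  assumes N: "N > 0" and i: "i < N"
  shows "YN N i \<subset> YN N (Suc i)"
proof -
  have "YN N i \<subseteq> YN N (Suc i)" using AN_mono[OF i] by (auto simp: YN_def)
  moreover obtain j where j: "j \<le> N" "j \<in> AN N (Suc i)" "j \<notin> AN N i" using AN_new[OF i] by blast
  then obtain z where "z \<in> C1" "idx N z = j" using idx_witness[OF N] by blast
  then have "z \<in> YN N (Suc i)" "z \<notin> YN N i" using j by (auto simp: YN_def)
  ultimately show ?thesis by blast
qed

lemma YN_top: "YN N N = C1"
  using idx_bound by (auto simp: YN_def AN_def)

lemma height_GN:
  assumes N: "N > 0"
  shows "height (GN N) XX = enat N"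
proof (rule height_eqI[where idx = "idx N" and Y = "YN N"])
  show "\<And>z. z \<in> topspace XX \<Longrightarrow> idx N z \<le> N" using idx_bound by simp
  show "\<And>z w. z \<in> topspace XX \<Longrightarrow> w \<in> topspace XX \<Longrightarrow> idx N z = idx N w \<Longrightarrow> \<exists>g\<in>GN N. g z = w"
    using GN_trans[OF N] by simp
  show "(\<forall>i\<le>N. closedin XX (YN N i) \<and> invariant_set XX (GN N) (YN N i)) \<and>
    (\<forall>i<N. YN N i \<subset> YN N (Suc i)) \<and> YN N N = topspace XX"
    using YN_closed[OF N] YN_inv YN_strict[OF N] YN_top by simp
qed

lemma height_Homeo: "height (Homeo XX) XX = enat 0"
proof (rule height_eqI[where idx = "\<lambda>_. 0" and Y = "\<lambda>_. C1"])
  show "\<And>z. z \<in> topspace XX \<Longrightarrow> (0::nat) \<le> 0" by simp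
  show "\<exists>g\<in>Homeo XX. g z = w" if "z \<in> topspace XX" "w \<in> topspace XX" for z w
  proof -
    have z: "cmod z = 1" and w: "cmod w = 1" using that by auto
    have u: "cmod (w * cnj z) = 1" using z w by (simp add: norm_mult)
    have "cnj z * z = 1" using complex_norm_square[of z] z by (simp add: mult.commute)
    then have "rot (w * cnj z) z = w" using z by (simp add: rot_def mult.assoc)
    then show ?thesis using rot_Homeo[OF u] by blast
  qed
  have "invariant_set XX (Homeo XX) C1"
    unfolding invariant_set_def using Homeo_C1 by (auto intro: exI[of _ 1])
  then show "(\<forall>i::nat\<le>0. closedin XX C1 \<and> invariant_set XX (Homeo XX) C1) \<and>
    (\<forall>i::nat<0. C1 \<subset> C1) \<and> C1 = topspace XX" by simp
qed

lemma Homeo_sub: "homeo_subgroup XX (Homeo XX)"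
  using stab_subgroup[of XX "\<lambda>_. 0::nat"] by simp

lemma id_sub: "homeo_subgroup XX {id}"
proof -
  have "homeo_inv XX id = id"
  proof
    fix y show "homeo_inv XX id y = id y"
      by (simp add: homeo_inv_def)
  qed
  then show ?thesis unfolding homeo_subgroup_def using Homeo_id by auto
qed

lemma height_id: "height {id} XX = \<infinity>"
proof -
  have big: "enat n \<le> height {id} XX" if n: "n > 0" for n
  proof -
    define Y where "Y i = C1 \<inter> {z. Re z \<le> -1 + 2 * real i / real n}" for i
    have cl: "closed {z. Re z \<le> c}" for c by (intro closed_Collect_le continuous_intros)
    have "(\<forall>i\<le>n. closedin XX (Y i) \<and> invariant_set XX {id} (Y i)) \<and>
      (\<forall>i<n. Y i \<subset> Y (Suc i)) \<and> Y n = topspace XX"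
    proof (intro conjI allI impI)
      fix i assume "i \<le> n"
      show "closedin XX (Y i)" unfolding Y_def using cl closedin_closed_Int by metis
      have "-1 \<in> Y i" unfolding Y_def using n by simp
      then have "Y i \<noteq> {}" by blast
      moreover have "Y i \<subseteq> C1" by (auto simp: Y_def)
      ultimately show "invariant_set XX {id} (Y i)" unfolding invariant_set_def by simp
    next
      fix i assume i: "i < n"
      have "Y i \<subseteq> Y (Suc i)" unfolding Y_def using n by (auto simp: divide_simps)
      moreover
      define x where "x = -1 + 2 * real (Suc i) / real n"
      have "x \<in> {-1..1}" using i n by (auto simp: x_def divide_simps)
      then have "of_real x + \<i> * of_real (sqrt (1 - x\<^sup>2)) \<in> C1" by (rule C1_mk)
      then have "of_real x + \<i> * of_real (sqrt (1 - x\<^sup>2)) \<in> Y (Suc i) - Y i"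
        unfolding Y_def x_def using n by (auto simp: divide_simps)
      ultimately show "Y i \<subset> Y (Suc i)" by blast
    next
      have "Y n = C1" unfolding Y_def using n C1_Re by auto
      then show "Y n = topspace XX" by simp
    qed
    then show ?thesis unfolding height_def by (intro Sup_upper) blast
  qed
  then show ?thesis
  proof (cases "height {id} XX")
    case (enat m)
    then have "enat (Suc m) \<le> enat m" using big[of "Suc m"] by simp
    then show ?thesis by simp
  qed simp
qed

theorem theorem3p1:
  shows "P_h (top_of_set (sphere (0::complex) 1)) = UNIV"
proof -
  have "e \<in> P_h XX" for e
  proof (cases e)
    case (enat n)
    show ?thesis
    proof (cases "n = 0")
      case True
      have "e = height (Homeo XX) XX" using height_Homeo True enat by simp
      then show ?thesis using Homeo_sub unfolding P_h_def by blast
    next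
      case False
      have "e = height (GN n) XX" using height_GN[of n] False enat by simp
      then show ?thesis using GN_sub unfolding P_h_def by blast
    qed
  next
    case infinity
    have "e = height {id} XX" using height_id infinity by simp
    then show ?thesis using id_sub unfolding P_h_def by blast
  qed
  then show ?thesis by auto
qed

end
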